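(* Let $D$ be a division ring and $R$ a maximal subring of $D$ which is not a division ring. Then $R$ is an abelian valuation ring for $D$ if and only if $D^c\subseteq R$. In this case $R$ is a duo ring.
   Context: All rings are associative unital and subrings share the identity. A maximal subring of a ring $T$ is a proper subring maximal under inclusion among proper subrings of $T$. $D^c$ denotes the derived (commutator) subgroup of the multiplicative group $D^*=D\setminus\{0\}$, generated by all $aba^{-1}b^{-1}$. A subring $R$ is an abelian valuation ring for $D$ if it is a valuation ring of $D$ (for each $x\in D^*$, $x\in R$ or $x^{-1}\in R$) with $dRd^{-1}=R$ for all $d\in D^*$ and with abelian value group $D^*/U(R)$. A ring is duo if every one-sided ideal is two-sided. *)

theory Defs
  imports Main
begin

definition subring_of :: "'a::ring_1 set \<Rightarrow> bool" where
  "subring_of S \<longleftrightarrow> 0 \<in> S \<and> 1 \<in> S \<and>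
     (\<forall>x\<in>S. \<forall>y\<in>S. x + y \<in> S \<and> x - y \<in> S \<and> x * y \<in> S)"

definition maximal_subring :: "'a::ring_1 set \<Rightarrow> bool" where
  "maximal_subring R \<longleftrightarrow> subring_of R \<and> R \<noteq> UNIV \<and>
     (\<forall>S. subring_of S \<and> S \<noteq> UNIV \<and> R \<subseteq> S \<longrightarrow> S = R)"

definition is_division_subring :: "'a::division_ring set \<Rightarrow> bool" where
  "is_division_subring R \<longleftrightarrow> subring_of R \<and> (\<forall>x\<in>R. x \<noteq> 0 \<longrightarrow> inverse x \<in> R)"

definition units_sub :: "'a::division_ring set \<Rightarrow> 'a set" where
  "units_sub R = {x. x \<in> R \<and> x \<noteq> 0 \<and> inverse x \<in> R}"

inductive_set derived_subgroup :: "'a::division_ring set" where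
  one: "1 \<in> derived_subgroup"
| comm: "a \<noteq> 0 \<Longrightarrow> b \<noteq> 0 \<Longrightarrow> a * b * inverse a * inverse b \<in> derived_subgroup"
| mult: "x \<in> derived_subgroup \<Longrightarrow> y \<in> derived_subgroup \<Longrightarrow> x * y \<in> derived_subgroup"
| inv: "x \<in> derived_subgroup \<Longrightarrow> inverse x \<in> derived_subgroup"

definition valuation_ring :: "'a::division_ring set \<Rightarrow> bool" where
  "valuation_ring R \<longleftrightarrow> subring_of R \<and> (\<forall>x. x \<noteq> 0 \<longrightarrow> x \<in> R \<or> inverse x \<in> R)"

text \<open>Abelian valuation ring: valuation ring, invariant under all inner automorphisms,
  and with abelian value group D^*/U(R): cosets (ab)U(R) and (ba)U(R) coincide.\<close>
definition abelian_valuation_ring :: "'a::division_ring set \<Rightarrow> bool" where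
  "abelian_valuation_ring R \<longleftrightarrow> valuation_ring R \<and>
     (\<forall>d. d \<noteq> 0 \<longrightarrow> (\<lambda>r. d * r * inverse d) ` R = R) \<and>
     (\<forall>a b. a \<noteq> 0 \<longrightarrow> b \<noteq> 0 \<longrightarrow>
        (\<lambda>u. a * b * u) ` units_sub R = (\<lambda>u. b * a * u) ` units_sub R)"

definition left_ideal_of :: "'a::ring_1 set \<Rightarrow> 'a set \<Rightarrow> bool" where
  "left_ideal_of R I \<longleftrightarrow> I \<subseteq> R \<and> 0 \<in> I \<and>
     (\<forall>x\<in>I. \<forall>y\<in>I. x + y \<in> I \<and> x - y \<in> I) \<and> (\<forall>r\<in>R. \<forall>x\<in>I. r * x \<in> I)"

definition right_ideal_of :: "'a::ring_1 set \<Rightarrow> 'a set \<Rightarrow> bool" where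
  "right_ideal_of R I \<longleftrightarrow> I \<subseteq> R \<and> 0 \<in> I \<and>
     (\<forall>x\<in>I. \<forall>y\<in>I. x + y \<in> I \<and> x - y \<in> I) \<and> (\<forall>r\<in>R. \<forall>x\<in>I. x * r \<in> I)"

definition duo_ring :: "'a::ring_1 set \<Rightarrow> bool" where
  "duo_ring R \<longleftrightarrow> (\<forall>I. left_ideal_of R I \<longrightarrow> right_ideal_of R I) \<and>
                    (\<forall>I. right_ideal_of R I \<longrightarrow> left_ideal_of R I)"

end

theory Submission
  imports Defs
begin

lemma sub_mem: assumes "subring_of R" shows "0 \<in> R" "1 \<in> R"
  "x \<in> R \<Longrightarrow> y \<in> R \<Longrightarrow> x + y \<in> R"
  "x \<in> R \<Longrightarrow> y \<in> R \<Longrightarrow> x - y \<in> R"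
  "x \<in> R \<Longrightarrow> y \<in> R \<Longrightarrow> x * y \<in> R"
  using assms unfolding subring_of_def by auto

lemma sub_neg: assumes "subring_of R" "x \<in> R" shows "- x \<in> R"
  using sub_mem(4)[OF assms(1) sub_mem(1)[OF assms(1)] assms(2)] by simp

lemma sub_pow: assumes "subring_of R" "x \<in> R" shows "x ^ k \<in> R"
  by (induction k) (auto intro: sub_mem assms)

lemma normal_from_derived:
  fixes R :: "'a::division_ring set"
  assumes "subring_of R" "derived_subgroup \<subseteq> R" "d \<noteq> 0" "r \<in> R"
  shows "d * r * inverse d \<in> R"
proof (cases "r = 0")
  case True then show ?thesis using sub_mem(1)[OF assms(1)] by simp
next
  case False
  have "d * r * inverse d * inverse r \<in> R"
    using derived_subgroup.comm[OF assms(3) False] assms(2) by auto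
  then have "d * r * inverse d * inverse r * r \<in> R" using sub_mem(5)[OF assms(1)] assms(4) by blast
  also have "d * r * inverse d * inverse r * r = d * r * inverse d" using False
    by (simp add: mult.assoc)
  finally show ?thesis .
qed

lemma inv_cancel1: "(a::'a::division_ring) \<noteq> 0 \<Longrightarrow> a * (inverse a * x) = x"
  by (simp add: mult.assoc[symmetric])
lemma inv_cancel2: "(a::'a::division_ring) \<noteq> 0 \<Longrightarrow> inverse a * (a * x) = x"
  by (simp add: mult.assoc[symmetric])

lemma conj_image:
  fixes R :: "'a::division_ring set"
  assumes N: "\<And>d r. d \<noteq> 0 \<Longrightarrow> r \<in> R \<Longrightarrow> d * r * inverse d \<in> R" and "d \<noteq> 0"
  shows "(\<lambda>r. d * r * inverse d) ` R = R"
proof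
  show "(\<lambda>r. d * r * inverse d) ` R \<subseteq> R" using N assms(2) by auto
  show "R \<subseteq> (\<lambda>r. d * r * inverse d) ` R"
  proof
    fix r assume "r \<in> R"
    have "inverse d * r * inverse (inverse d) \<in> R" using N[of "inverse d" r] \<open>r \<in> R\<close> assms(2) by simp
    moreover have "r = d * (inverse d * r * inverse (inverse d)) * inverse d"
      using assms(2) by (simp add: mult.assoc inv_cancel1)
    ultimately show "r \<in> (\<lambda>r. d * r * inverse d) ` R" by blast
  qed
qed

lemma units_incl:
  fixes R :: "'a::division_ring set"
  assumes S: "subring_of R" and D: "derived_subgroup \<subseteq> R" and a: "a \<noteq> 0" and b: "b \<noteq> 0"
  shows "(\<lambda>u. a * b * u) ` units_sub R \<subseteq> (\<lambda>u. b * a * u) ` units_sub R"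
proof
  fix z assume "z \<in> (\<lambda>u. a * b * u) ` units_sub R"
  then obtain u where u: "u \<in> R" "u \<noteq> 0" "inverse u \<in> R" and z: "z = a * b * u"
    unfolding units_sub_def by auto
  define c where "c = inverse a * inverse b * inverse (inverse a) * inverse (inverse b)"
  define c' where "c' = inverse b * inverse a * inverse (inverse b) * inverse (inverse a)"
  have c: "c \<in> R" using derived_subgroup.comm[of "inverse a" "inverse b"] a b D
    unfolding c_def by auto
  have c': "c' \<in> R" using derived_subgroup.comm[of "inverse b" "inverse a"] a b D
    unfolding c'_def by auto
  have cc: "c' * c = 1" unfolding c_def c'_def using a b
    by (simp add: mult.assoc inv_cancel1 inv_cancel2)
  have cnz: "c \<noteq> 0" using cc by auto
  have ic: "inverse c = c'" using cc by (metis inverse_unique mult.assoc cnz mult_1_right right_inverse)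
  have "c * u \<in> units_sub R" unfolding units_sub_def using c u cnz ic c'
    by (auto simp: nonzero_inverse_mult_distrib intro: sub_mem[OF S])
  moreover have "z = b * a * (c * u)" unfolding z c_def using a b by (simp add: mult.assoc inv_cancel1)
  ultimately show "z \<in> (\<lambda>u. b * a * u) ` units_sub R" by blast
qed

lemma avr_derived:
  fixes R :: "'a::division_ring set"
  assumes "abelian_valuation_ring R"
  shows "derived_subgroup \<subseteq> R"
proof -
  have S: "subring_of R" using assms unfolding abelian_valuation_ring_def valuation_ring_def by auto
  have C: "\<And>d r. d \<noteq> 0 \<Longrightarrow> r \<in> R \<Longrightarrow> d * r * inverse d \<in> R"
    using assms unfolding abelian_valuation_ring_def by blast
  have A: "\<And>a b. a \<noteq> 0 \<Longrightarrow> b \<noteq> 0 \<Longrightarrow>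
        (\<lambda>u. a * b * u) ` units_sub R = (\<lambda>u. b * a * u) ` units_sub R"
    using assms unfolding abelian_valuation_ring_def by blast
  have one_u: "1 \<in> units_sub R" using sub_mem(2)[OF S] unfolding units_sub_def by auto
  have "x \<in> units_sub R" if "x \<in> derived_subgroup" for x
    using that
  proof (induction rule: derived_subgroup.induct)
    case one then show ?case by (rule one_u)
  next
    case (comm a b)
    have "a * b * 1 \<in> (\<lambda>u. b * a * u) ` units_sub R" using A[OF comm] one_u by blast
    then obtain u where u: "u \<in> R" "u \<noteq> 0" "inverse u \<in> R" and e: "a * b = b * a * u"
      unfolding units_sub_def by auto
    have ba: "b * a \<noteq> 0" using comm by simp
    have eq: "a * b * inverse a * inverse b = (b * a) * u * inverse (b * a)"
      using comm by (simp add: e nonzero_inverse_mult_distrib mult.assoc)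
    have eq2: "inverse (a * b * inverse a * inverse b) = (b * a) * inverse u * inverse (b * a)"
      unfolding eq using comm u ba by (simp add: nonzero_inverse_mult_distrib mult.assoc)
    show ?case unfolding units_sub_def using C[OF ba u(1)] C[OF ba u(3)] eq eq2 comm u
      by simp
  next
    case (mult x y)
    then show ?case unfolding units_sub_def
      by (auto simp: nonzero_inverse_mult_distrib intro: sub_mem[OF S])
  next
    case (inv x)
    then show ?case unfolding units_sub_def by auto
  qed
  then show ?thesis unfolding units_sub_def by auto
qed

lemma avr_duo:
  fixes R :: "'a::division_ring set"
  assumes "abelian_valuation_ring R"
  shows "duo_ring R"
proof -
  have C: "\<And>d r. d \<noteq> 0 \<Longrightarrow> r \<in> R \<Longrightarrow> d * r * inverse d \<in> R"
    using assms unfolding abelian_valuation_ring_def by blast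
  have L: "right_ideal_of R I" if "left_ideal_of R I" for I
    unfolding right_ideal_of_def
  proof (intro conjI ballI)
    fix r x assume r: "r \<in> R" and x: "x \<in> I"
    show "x * r \<in> I"
    proof (cases "x = 0")
      case True then show ?thesis using that unfolding left_ideal_of_def by auto
    next
      case False
      have "x * r = (x * r * inverse x) * x" using False by (simp add: mult.assoc)
      then show ?thesis using that C[OF False r] x unfolding left_ideal_of_def by metis
    qed
  qed (use that in \<open>auto simp: left_ideal_of_def\<close>)
  have Rt: "left_ideal_of R I" if "right_ideal_of R I" for I
    unfolding left_ideal_of_def
  proof (intro conjI ballI)
    fix r x assume r: "r \<in> R" and x: "x \<in> I"
    show "r * x \<in> I"
    proof (cases "x = 0")
      case True then show ?thesis using that unfolding right_ideal_of_def by auto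
    next
      case False
      have "r * x = x * (inverse x * r * inverse (inverse x))" using False by (simp add: mult.assoc inv_cancel1)
      moreover have "inverse x * r * inverse (inverse x) \<in> R" using C[of "inverse x" r] False r by simp
      ultimately show ?thesis using that x unfolding right_ideal_of_def by metis
    qed
  qed (use that in \<open>auto simp: right_ideal_of_def\<close>)
  show ?thesis unfolding duo_ring_def using L Rt by blast
qed

definition Pn :: "'a::ring_1 set \<Rightarrow> 'a \<Rightarrow> nat \<Rightarrow> 'a set" where
  "Pn S y n = {p. \<exists>f. (\<forall>i. f i \<in> S) \<and> p = (\<Sum>i<n. f i * y ^ i)}"

lemma Pn_zero: "0 \<in> S \<Longrightarrow> 0 \<in> Pn S y n"
  unfolding Pn_def by (rule CollectI, rule exI[of _ "\<lambda>_. 0"]) simp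

lemma Pn_zero_eq: "Pn S y 0 \<subseteq> {0}"
  unfolding Pn_def by auto

lemma Pn_add:
  assumes "\<And>s t. s \<in> S \<Longrightarrow> t \<in> S \<Longrightarrow> s + t \<in> S" "p \<in> Pn S y n" "q \<in> Pn S y n"
  shows "p + q \<in> Pn S y n"
proof -
  obtain f g where f: "\<forall>i. f i \<in> S" "p = (\<Sum>i<n. f i * y ^ i)"
    and g: "\<forall>i. g i \<in> S" "q = (\<Sum>i<n. g i * y ^ i)" using assms(2,3) unfolding Pn_def by auto
  have "p + q = (\<Sum>i<n. (f i + g i) * y ^ i)" unfolding f g by (simp add: sum.distrib distrib_right)
  then show ?thesis unfolding Pn_def using f g assms(1)
    by (intro CollectI exI[of _ "\<lambda>i. f i + g i"]) auto
qed

lemma Pn_term: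
  assumes "0 \<in> S" "s \<in> S" "k < n"
  shows "s * y ^ k \<in> Pn S y n"
proof -
  have "(\<Sum>i<n. (if i = k then s else 0) * y ^ i) = (\<Sum>i<n. if i = k then s * y ^ k else 0)"
    by (rule sum.cong) auto
  also have "\<dots> = s * y ^ k" using assms(3) by simp
  finally show ?thesis unfolding Pn_def using assms(1,2)
    by (intro CollectI exI[of _ "\<lambda>i. if i = k then s else 0"]) auto
qed

lemma Pn_Suc:
  assumes "0 \<in> S" "p \<in> Pn S y n" shows "p \<in> Pn S y (Suc n)"
proof -
  obtain f where f: "\<forall>i. f i \<in> S" "p = (\<Sum>i<n. f i * y ^ i)" using assms(2) unfolding Pn_def by auto
  have "(\<Sum>i<Suc n. (if i < n then f i else 0) * y ^ i) = p" unfolding f by simp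
  then show ?thesis unfolding Pn_def using f assms(1)
    by (intro CollectI exI[of _ "\<lambda>i. if i < n then f i else 0"]) auto
qed

lemma Pn_mono:
  assumes "0 \<in> S" "n \<le> N" "p \<in> Pn S y n" shows "p \<in> Pn S y N"
  using assms(2,3)
proof (induction N)
  case 0 then show ?case by simp
next
  case (Suc N)
  then show ?case using Pn_Suc[OF assms(1)] by (cases "n = Suc N") auto
qed

lemma Pn_sum:
  assumes "0 \<in> S" "\<And>s t. s \<in> S \<Longrightarrow> t \<in> S \<Longrightarrow> s + t \<in> S" "finite A" "\<And>i. i \<in> A \<Longrightarrow> t i \<in> Pn S y n"
  shows "(\<Sum>i\<in>A. t i) \<in> Pn S y n"
  using assms(3,4)
proof (induction A rule: finite_induct)
  case empty then show ?case using Pn_zero[OF assms(1)] by simp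
next
  case (insert x F) then show ?case using Pn_add[OF assms(2)] by simp
qed

lemma Pn_neg:
  assumes "\<And>s. s \<in> S \<Longrightarrow> - s \<in> S" "p \<in> Pn S y n" shows "- p \<in> Pn S y n"
proof -
  obtain f where f: "\<forall>i. f i \<in> S" "p = (\<Sum>i<n. f i * y ^ i)" using assms(2) unfolding Pn_def by auto
  have "- p = (\<Sum>i<n. (- f i) * y ^ i)" unfolding f by (simp add: sum_negf)
  then show ?thesis unfolding Pn_def using f assms(1)
    by (intro CollectI exI[of _ "\<lambda>i. - f i"]) auto
qed

definition Rgen :: "'a::ring_1 set \<Rightarrow> 'a \<Rightarrow> 'a set" where
  "Rgen R y = (\<Union>n. Pn R y n)"

lemma Rgen_subring:
  fixes R :: "'a::division_ring set"
  assumes S: "subring_of R" and N: "\<And>d r. d \<noteq> 0 \<Longrightarrow> r \<in> R \<Longrightarrow> d * r * inverse d \<in> R"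
    and y: "y \<noteq> 0"
  shows "subring_of (Rgen R y)" "R \<subseteq> Rgen R y" "y \<in> Rgen R y"
proof -
  note z = sub_mem(1)[OF S] and ad = sub_mem(3)[OF S]
  have trm: "r * y ^ k \<in> Rgen R y" if "r \<in> R" for r k
    unfolding Rgen_def using Pn_term[OF z that, of k "Suc k"] by blast
  show "R \<subseteq> Rgen R y" using trm[of _ 0] by auto
  show "y \<in> Rgen R y" using trm[of 1 1] sub_mem(2)[OF S] by auto
  have addc: "p + q \<in> Rgen R y" if pqm: "p \<in> Rgen R y" "q \<in> Rgen R y" for p q
  proof -
    obtain n m where "p \<in> Pn R y n" "q \<in> Pn R y m" using pqm by (auto simp: Rgen_def)
    then have "p \<in> Pn R y (max n m)" "q \<in> Pn R y (max n m)" using Pn_mono[OF z, of n "max n m"] Pn_mono[OF z, of m "max n m"] by auto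
    then show ?thesis using Pn_add[OF ad] unfolding Rgen_def by blast
  qed
  have negc: "- p \<in> Rgen R y" if "p \<in> Rgen R y" for p
    using that Pn_neg[OF sub_neg[OF S]] unfolding Rgen_def by blast
  have mulc: "p * q \<in> Rgen R y" if pqm: "p \<in> Rgen R y" "q \<in> Rgen R y" for p q
  proof -
    obtain n m where "p \<in> Pn R y n" "q \<in> Pn R y m" using pqm by (auto simp: Rgen_def)
    then obtain f g where f: "\<forall>i. f i \<in> R" "p = (\<Sum>i<n. f i * y ^ i)"
      and g: "\<forall>i. g i \<in> R" "q = (\<Sum>i<m. g i * y ^ i)" unfolding Pn_def by auto
    have pq: "p * q = (\<Sum>i<n. \<Sum>j<m. f i * y ^ i * (g j * y ^ j))"
      unfolding f g by (simp add: sum_distrib_left sum_distrib_right sum.swap[of _ "{..<m}"])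
    have "(\<Sum>i<n. \<Sum>j<m. f i * y ^ i * (g j * y ^ j)) \<in> Pn R y (n + m)"
    proof (intro Pn_sum[OF z] finite_lessThan)
      fix s t assume "s \<in> R" "t \<in> R" then show "s + t \<in> R" by (rule ad)
    next
      fix i j assume i: "i \<in> {..<n}" and j: "j \<in> {..<m}"
      have yi: "y ^ i \<noteq> 0" using y by simp
      have e: "f i * y ^ i * (g j * y ^ j) = (f i * (y ^ i * g j * inverse (y ^ i))) * y ^ (i + j)"
        using yi by (simp add: mult.assoc power_add inv_cancel2)
      have "f i * (y ^ i * g j * inverse (y ^ i)) \<in> R"
        using N[OF yi, of "g j"] f g sub_mem(5)[OF S] by blast
      then show "f i * y ^ i * (g j * y ^ j) \<in> Pn R y (n + m)"
        unfolding e using i j by (intro Pn_term[OF z]) auto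
    qed (auto intro: ad)
    then show ?thesis unfolding pq Rgen_def by blast
  qed
  show "subring_of (Rgen R y)" unfolding subring_of_def
    using addc negc mulc trm[of 0 0] trm[of 1 0] sub_mem(1,2)[OF S]
    by (auto simp: diff_conv_add_uminus simp del: add_uminus_conv_diff)
qed

lemma Rgen_univ:
  fixes R :: "'a::division_ring set"
  assumes M: "maximal_subring R" and N: "\<And>d r. d \<noteq> 0 \<Longrightarrow> r \<in> R \<Longrightarrow> d * r * inverse d \<in> R"
    and y: "y \<noteq> 0" "y \<notin> R"
  shows "Rgen R y = UNIV"
proof -
  have S: "subring_of R" using M unfolding maximal_subring_def by auto
  note G = Rgen_subring[OF S N y(1)]
  show ?thesis using M G y(2) unfolding maximal_subring_def by blast
qed

lemma inv_pow:
  fixes y :: "'a::division_ring"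
  assumes "y \<noteq> 0" "k \<le> n" shows "inverse y ^ k * y ^ n = y ^ (n - k)"
proof -
  have "y ^ n = y ^ k * y ^ (n - k)" using assms(2) by (metis le_add_diff_inverse power_add)
  moreover have "inverse y ^ k * y ^ k = 1" using assms(1) by (simp add: power_inverse)
  ultimately show ?thesis by (metis mult.assoc mult_1_left)
qed

lemma Pn_inv_form:
  fixes R :: "'a::division_ring set"
  assumes S: "subring_of R" and a: "a \<noteq> 0" "a \<in> R"
  shows "p \<in> Pn R (inverse a) k \<Longrightarrow> \<exists>c\<in>R. p = c * inverse a ^ k"
proof -
  assume "p \<in> Pn R (inverse a) k"
  then obtain f where f: "\<forall>i. f i \<in> R" "p = (\<Sum>i<k. f i * inverse a ^ i)" unfolding Pn_def by auto
  have "\<exists>c\<in>R. (\<Sum>i<k. f i * inverse a ^ i) = c * inverse a ^ k" for k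
  proof (induction k)
    case 0 then show ?case using sub_mem(1)[OF S] by auto
  next
    case (Suc k)
    then obtain c where c: "c \<in> R" "(\<Sum>i<k. f i * inverse a ^ i) = c * inverse a ^ k" by auto
    have "(\<Sum>i<Suc k. f i * inverse a ^ i) = (c + f k) * inverse a ^ k" using c by (simp add: distrib_right)
    also have "\<dots> = ((c + f k) * a) * inverse a ^ Suc k"
      by (simp only: power_Suc mult.assoc inv_cancel1[OF a(1)])
    finally have eq: "(\<Sum>i<Suc k. f i * inverse a ^ i) = ((c + f k) * a) * inverse a ^ Suc k" .
    have "(c + f k) * a \<in> R" using c(1) f(1) a(2) sub_mem(3,5)[OF S] by blast
    then show ?case using eq by blast
  qed
  then show ?thesis using f by auto
qed

lemma local_prop:
  fixes R :: "'a::division_ring set"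
  assumes M: "maximal_subring R" and N: "\<And>d r. d \<noteq> 0 \<Longrightarrow> r \<in> R \<Longrightarrow> d * r * inverse d \<in> R"
    and a: "a \<in> R" "a \<noteq> 0" "inverse a \<notin> R" and c: "c \<in> R"
  shows "1 - a * c \<noteq> 0 \<and> inverse (1 - a * c) \<in> R"
proof -
  have S: "subring_of R" using M unfolding maximal_subring_def by auto
  define u where "u = 1 - a * c"
  have uR: "u \<in> R" unfolding u_def using a c sub_mem(2,4,5)[OF S] by blast
  have unz: "u \<noteq> 0"
  proof
    assume "u = 0"
    then have "a * c = 1" unfolding u_def by simp
    then have "inverse a = c" by (rule inverse_unique)
    then show False using a c by simp
  qed
  have "inverse u \<in> R"
  proof (rule ccontr)
    assume nu: "inverse u \<notin> R"
    have "Rgen R (inverse a) = UNIV" using Rgen_univ[OF M N] a by simp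
    then obtain k where "inverse u \<in> Pn R (inverse a) k" unfolding Rgen_def by blast
    then obtain e where e: "e \<in> R" "inverse u = e * inverse a ^ k" using Pn_inv_form[OF S a(2,1)] by blast
    have "inverse u * a ^ k = e" using e(2) inv_pow[OF a(2) order_refl, of k] by (simp add: mult.assoc)
    then have ak: "a ^ k = u * e" using unz by (metis inv_cancel1)
    define t where "t = a * c"
    have tR: "t \<in> R" unfolding t_def using a c sub_mem(5)[OF S] by blast
    have th: "\<exists>h\<in>R. t ^ j = a ^ j * h" for j
    proof (induction j)
      case 0 then show ?case using sub_mem(2)[OF S] by auto
    next
      case (Suc j)
      then obtain h where h: "h \<in> R" "t ^ j = a ^ j * h" by auto
      have aj: "a ^ j \<noteq> 0" using a by simp
      have "t ^ Suc j = t * (a ^ j * h)" by (simp add: h(2))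
      also have "\<dots> = a * (c * a ^ j) * h" by (simp add: t_def mult.assoc)
      also have "c * a ^ j = a ^ j * (inverse (a ^ j) * c * inverse (inverse (a ^ j)))"
        using aj by (simp add: mult.assoc inv_cancel1)
      finally have "t ^ Suc j = a ^ Suc j * ((inverse (a ^ j) * c * inverse (inverse (a ^ j))) * h)"
        by (simp add: mult.assoc)
      moreover have "inverse (a ^ j) * c * inverse (inverse (a ^ j)) \<in> R"
        using N[of "inverse (a ^ j)" c] aj c by simp
      ultimately show ?case using h sub_mem(5)[OF S] by blast
    qed
    have ts: "\<exists>s\<in>R. 1 - t ^ j = u * s" for j
    proof (induction j)
      case 0 then show ?case using sub_mem(1)[OF S] by auto
    next
      case (Suc j)
      then obtain s where s: "s \<in> R" "1 - t ^ j = u * s" by auto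
      have tj: "t ^ j \<in> R" using sub_pow[OF S tR] .
      have ut: "u = 1 - t" by (simp add: u_def t_def)
      have "t ^ j * u = t ^ j - t ^ Suc j" unfolding ut power_Suc2 by (simp add: right_diff_distrib)
      then have "1 - t ^ Suc j = (1 - t ^ j) + t ^ j * u" by simp
      also have "t ^ j * u = u * (inverse u * t ^ j * inverse (inverse u))"
        using unz by (simp add: mult.assoc inv_cancel1)
      finally have "1 - t ^ Suc j = u * (s + inverse u * t ^ j * inverse (inverse u))"
        using s by (simp add: distrib_left)
      moreover have "inverse u * t ^ j * inverse (inverse u) \<in> R"
        using N[of "inverse u" "t ^ j"] unz tj by simp
      ultimately show ?case using s sub_mem(3)[OF S] by blast
    qed
    obtain h where h: "h \<in> R" "t ^ k = a ^ k * h" using th by blast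
    obtain s where s: "s \<in> R" "1 - t ^ k = u * s" using ts by blast
    have "1 = (1 - t ^ k) + t ^ k" by simp
    also have "\<dots> = u * (s + e * h)" using s h ak by (simp add: distrib_left mult.assoc)
    finally have "inverse u = s + e * h" by (metis inverse_unique)
    moreover have "s + e * h \<in> R" using s h e sub_mem(3,5)[OF S] by blast
    ultimately show False using nu by simp
  qed
  then show ?thesis using unz unfolding u_def by simp
qed

lemma aR_props:
  fixes R :: "'a::division_ring set"
  assumes S: "subring_of R"
  shows "0 \<in> (\<lambda>r. a * r) ` R" "\<And>s t. s \<in> (\<lambda>r. a * r) ` R \<Longrightarrow> t \<in> (\<lambda>r. a * r) ` R \<Longrightarrow> s + t \<in> (\<lambda>r. a * r) ` R"
proof -
  show "0 \<in> (\<lambda>r. a * r) ` R" using sub_mem(1)[OF S] by (metis image_eqI mult_zero_right)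
  fix s t assume "s \<in> (\<lambda>r. a * r) ` R" "t \<in> (\<lambda>r. a * r) ` R"
  then obtain r1 r2 where "r1 \<in> R" "r2 \<in> R" "s = a * r1" "t = a * r2" by auto
  then show "s + t \<in> (\<lambda>r. a * r) ` R" using sub_mem(3)[OF S]
    by (metis distrib_left image_eqI)
qed

lemma kap_step:
  fixes R :: "'a::division_ring set"
  assumes S: "subring_of R" and a: "a \<in> R" "a \<noteq> 0"
    and loc: "\<And>c. c \<in> R \<Longrightarrow> 1 - a * c \<noteq> 0 \<and> inverse (1 - a * c) \<in> R"
    and y: "y \<noteq> 0"
    and h1: "1 \<in> Pn ((\<lambda>r. a * r) ` R) y (Suc n)"
    and h2: "1 \<in> Pn ((\<lambda>r. a * r) ` R) (inverse y) (Suc m)"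
    and mn: "m \<le> n"
  shows "1 \<in> Pn ((\<lambda>r. a * r) ` R) y n"
proof -
  let ?A = "(\<lambda>r. a * r) ` R"
  obtain f where f: "\<forall>i. f i \<in> ?A" "1 = (\<Sum>i<Suc n. f i * y ^ i)" using h1 unfolding Pn_def by auto
  obtain g where g: "\<forall>i. g i \<in> ?A" "1 = (\<Sum>i<Suc m. g i * inverse y ^ i)" using h2 unfolding Pn_def by auto
  obtain F where F: "F \<in> R" "f n = a * F" using f(1) by blast
  obtain G where G: "G \<in> R" "g 0 = a * G" using g(1) by blast
  define u where "u = 1 - a * G"
  have u: "u \<noteq> 0" "inverse u \<in> R" using loc[OF G(1)] unfolding u_def by auto
  have "1 = g 0 + (\<Sum>j<m. g (Suc j) * inverse y ^ Suc j)"
    using g(2) by (simp only: sum.lessThan_Suc_shift power_0 mult_1_right)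
  then have ueq: "u = (\<Sum>j<m. g (Suc j) * inverse y ^ Suc j)" unfolding u_def G(2)
    by (simp add: algebra_simps)
  define w where "w = inverse u"
  have "1 = w * u" using u(1) unfolding w_def by simp
  also have "\<dots> = (\<Sum>j<m. w * g (Suc j) * inverse y ^ Suc j)"
    unfolding ueq by (simp add: sum_distrib_left mult.assoc)
  finally have one: "1 = (\<Sum>j<m. w * g (Suc j) * inverse y ^ Suc j)" .
  have "y ^ n = (\<Sum>j<m. w * g (Suc j) * inverse y ^ Suc j) * y ^ n"
    by (subst one[symmetric]) simp
  also have "\<dots> = (\<Sum>j<m. w * g (Suc j) * y ^ (n - Suc j))"
    unfolding sum_distrib_right
  proof (rule sum.cong[OF refl])
    fix j assume "j \<in> {..<m}"
    then have "Suc j \<le> n" using mn by auto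
    then show "w * g (Suc j) * inverse y ^ Suc j * y ^ n = w * g (Suc j) * y ^ (n - Suc j)"
      using inv_pow[OF y, of "Suc j" n] by (simp only: mult.assoc)
  qed
  finally have yn: "y ^ n = (\<Sum>j<m. w * g (Suc j) * y ^ (n - Suc j))" .
  have "1 = (\<Sum>i<n. f i * y ^ i) + f n * y ^ n" using f(2) by simp
  also have "f n * y ^ n = (\<Sum>j<m. (a * (F * w * g (Suc j))) * y ^ (n - Suc j))"
    unfolding yn F(2) by (simp add: sum_distrib_left mult.assoc)
  finally have eq: "1 = (\<Sum>i<n. f i * y ^ i) + (\<Sum>j<m. (a * (F * w * g (Suc j))) * y ^ (n - Suc j))" .
  have p1: "(\<Sum>i<n. f i * y ^ i) \<in> Pn ?A y n" unfolding Pn_def using f(1) by blast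
  have p2: "(\<Sum>j<m. (a * (F * w * g (Suc j))) * y ^ (n - Suc j)) \<in> Pn ?A y n"
  proof (rule Pn_sum[OF aR_props(1)[OF S]])
    show "finite {..<m}" by simp
  next
    fix s t assume "s \<in> ?A" "t \<in> ?A" then show "s + t \<in> ?A" by (rule aR_props(2)[OF S])
  next
    fix j assume j: "j \<in> {..<m}"
    obtain gj where gj: "gj \<in> R" "g (Suc j) = a * gj" using g(1) by blast
    have "F * w * g (Suc j) \<in> R" using F(1) u(2) a gj sub_mem(5)[OF S] unfolding w_def by metis
    then have "a * (F * w * g (Suc j)) \<in> ?A" by blast
    moreover have "n - Suc j < n" using j mn by auto
    ultimately show "a * (F * w * g (Suc j)) * y ^ (n - Suc j) \<in> Pn ?A y n"
      by (intro Pn_term[OF aR_props(1)[OF S]])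
  qed
  show ?thesis using Pn_add[OF aR_props(2)[OF S] p1 p2] eq by simp
qed

lemma mult_Pn:
  assumes "p \<in> Pn R y n" shows "a * p \<in> Pn ((\<lambda>r. a * r) ` R) y n"
proof -
  obtain f where f: "\<forall>i. f i \<in> R" "p = (\<Sum>i<n. f i * y ^ i)" using assms unfolding Pn_def by auto
  have "a * p = (\<Sum>i<n. (a * f i) * y ^ i)" unfolding f by (simp add: sum_distrib_left mult.assoc)
  then show ?thesis unfolding Pn_def using f(1)
    by (intro CollectI exI[of _ "\<lambda>i. a * f i"]) auto
qed

lemma valuation_from:
  fixes R :: "'a::division_ring set"
  assumes M: "maximal_subring R" and N: "\<And>d r. d \<noteq> 0 \<Longrightarrow> r \<in> R \<Longrightarrow> d * r * inverse d \<in> R"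
    and a: "a \<in> R" "a \<noteq> 0" "inverse a \<notin> R" and x: "x \<noteq> 0"
  shows "x \<in> R \<or> inverse x \<in> R"
proof (rule ccontr)
  assume "\<not> (x \<in> R \<or> inverse x \<in> R)"
  then have x1: "x \<notin> R" and x2: "inverse x \<notin> R" by auto
  have S: "subring_of R" using M unfolding maximal_subring_def by auto
  let ?A = "(\<lambda>r. a * r) ` R"
  have loc: "\<And>c. c \<in> R \<Longrightarrow> 1 - a * c \<noteq> 0 \<and> inverse (1 - a * c) \<in> R"
    using local_prop[OF M N a] by blast
  have ex: "\<exists>n. 1 \<in> Pn ?A y n" if "y \<noteq> 0" "y \<notin> R" for y
  proof -
    have "inverse a \<in> Rgen R y" using Rgen_univ[OF M N that] by simp
    then obtain n where "inverse a \<in> Pn R y n" unfolding Rgen_def by blast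
    then have "a * inverse a \<in> Pn ?A y n" by (rule mult_Pn)
    then show ?thesis using a(2) by auto
  qed
  have ix: "inverse x \<noteq> 0" using x by simp
  define n0 where "n0 = (LEAST n. 1 \<in> Pn ?A x n)"
  define m0 where "m0 = (LEAST n. 1 \<in> Pn ?A (inverse x) n)"
  have n0: "1 \<in> Pn ?A x n0" unfolding n0_def using ex[OF x x1] by (metis LeastI)
  have m0: "1 \<in> Pn ?A (inverse x) m0" unfolding m0_def using ex[OF ix x2] by (metis LeastI)
  have n0min: "\<And>k. 1 \<in> Pn ?A x k \<Longrightarrow> n0 \<le> k" unfolding n0_def by (rule Least_le)
  have m0min: "\<And>k. 1 \<in> Pn ?A (inverse x) k \<Longrightarrow> m0 \<le> k" unfolding m0_def by (rule Least_le)
  have "n0 \<noteq> 0" using n0 Pn_zero_eq[of ?A x] by (metis one_neq_zero singletonD subsetD)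
  then obtain n where n: "n0 = Suc n" by (cases n0) auto
  have "m0 \<noteq> 0" using m0 Pn_zero_eq[of ?A "inverse x"] by (metis one_neq_zero singletonD subsetD)
  then obtain m where m: "m0 = Suc m" by (cases m0) auto
  show False
  proof (cases "m \<le> n")
    case True
    have "1 \<in> Pn ?A x n" using kap_step[OF S a(1,2) loc x] n0 m0 True unfolding n m by blast
    then show False using n0min n by force
  next
    case False
    have m0': "1 \<in> Pn ?A (inverse (inverse x)) (Suc n)" using n0 n x by simp
    have "1 \<in> Pn ?A (inverse x) m" using kap_step[OF S a(1,2) loc ix _ m0' ] m0 False unfolding m by simp
    then show False using m0min m by force
  qed
qed

theorem proposition3p4:
  fixes R :: "'a::division_ring set"
  assumes "maximal_subring R"
    and "\<not> is_division_subring R"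
  shows "(abelian_valuation_ring R \<longleftrightarrow> derived_subgroup \<subseteq> R) \<and>
         (abelian_valuation_ring R \<longrightarrow> duo_ring R)"
proof -
  have S: "subring_of R" using assms(1) unfolding maximal_subring_def by auto
  obtain a where a: "a \<in> R" "a \<noteq> 0" "inverse a \<notin> R"
    using assms(2) S unfolding is_division_subring_def by auto
  have "abelian_valuation_ring R" if D: "derived_subgroup \<subseteq> R"
  proof -
    have N: "\<And>d r. d \<noteq> 0 \<Longrightarrow> r \<in> R \<Longrightarrow> d * r * inverse d \<in> R"
      using normal_from_derived[OF S D] by blast
    have V: "valuation_ring R" unfolding valuation_ring_def
      using S valuation_from[OF assms(1) N a] by blast
    have C: "\<forall>d. d \<noteq> 0 \<longrightarrow> (\<lambda>r. d * r * inverse d) ` R = R" using conj_image[OF N] by blast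
    have U: "\<forall>a b. a \<noteq> 0 \<longrightarrow> b \<noteq> 0 \<longrightarrow>
        (\<lambda>u. a * b * u) ` units_sub R = (\<lambda>u. b * a * u) ` units_sub R"
      using units_incl[OF S D] by (meson subset_antisym)
    show ?thesis unfolding abelian_valuation_ring_def using V C U by blast
  qed
  then show ?thesis using avr_derived avr_duo by blast
qed

end
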